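(* Let $D=\mathrm{diag}(1,-1,1,-1,\ldots)=(1,-x)$, $\mathbb{F}^{\rm S}=(1,x(1+x))$, $\mathbb{L}^{\rm S}=(1+2x,x(1+x))$, and write $D(\mathbb{F}^{\rm S})^{-1}D=[r_{ij}]_{i,j\ge0}$ and $D(\mathbb{L}^{\rm S})^{-1}D=[q_{ij}]_{i,j\ge0}$. Then for all positive integers $i,j$ with $i\ge j$: (a) $r_{i,i-j+1}=r_{i-1,i-1}+r_{i-1,i-2}+\cdots+r_{i-1,i-j}$; (b) $q_{i,i-j+1}=q_{i-1,i-1}+q_{i-1,i-2}+\cdots+q_{i-1,i-j}$.
   Context: All matrices are infinite with rows and columns indexed by $0,1,2,\ldots$. For formal power series $g(x)=g_0+g_1x+\cdots$ with $g_0\ne0$ and $f(x)=f_1x+f_2x^2+\cdots$ with $f_1\ne0$, $(g(x),f(x))$ denotes the (Riordan) infinite lower triangular matrix whose $j$-th column has generating function $g(x)f(x)^j$. These matrices form a group under matrix multiplication with $(g,f)(h,l)=(g\cdot h(f),l(f))$. *)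

theory Defs
  imports "HOL-Computational_Algebra.Formal_Power_Series"
begin

text \<open>Infinite matrices are functions nat => nat => 'a (row, column).
  The Riordan array (g,f) has j-th column with generating function g * f^j.\<close>

definition riordan :: "'a::comm_ring_1 fps \<Rightarrow> 'a fps \<Rightarrow> nat \<Rightarrow> nat \<Rightarrow> 'a" where
  "riordan g f i j = fps_nth (g * f ^ j) i"

definition lower_tri :: "(nat \<Rightarrow> nat \<Rightarrow> 'a::zero) \<Rightarrow> bool" where
  "lower_tri A \<longleftrightarrow> (\<forall>i j. i < j \<longrightarrow> A i j = 0)"

text \<open>Product of infinite matrices whose left factor is lower triangular
  (the sum is then finite and agrees with the usual product).\<close>
definition lt_mult :: "(nat \<Rightarrow> nat \<Rightarrow> 'a::comm_ring_1) \<Rightarrow> (nat \<Rightarrow> nat \<Rightarrow> 'a) \<Rightarrow> nat \<Rightarrow> nat \<Rightarrow> 'a" where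
  "lt_mult A B i j = (\<Sum>k\<le>i. A i k * B k j)"

definition id_mat :: "nat \<Rightarrow> nat \<Rightarrow> 'a::comm_ring_1" where
  "id_mat i j = (if i = j then 1 else 0)"

definition mat_inv :: "(nat \<Rightarrow> nat \<Rightarrow> 'a::comm_ring_1) \<Rightarrow> nat \<Rightarrow> nat \<Rightarrow> 'a" where
  "mat_inv A = (THE B. lower_tri B \<and> lt_mult A B = id_mat \<and> lt_mult B A = id_mat)"

end

theory Submission
  imports Defs
begin

lemma sum_atMost_split: "(\<Sum>k\<le>i. f k) = f i + (\<Sum>k<i. f k)" for f :: "nat \<Rightarrow> int"
  by (simp add: lessThan_Suc_atMost[symmetric])

lemma cancel_lt:
  fixes N E :: "nat \<Rightarrow> nat \<Rightarrow> int"
  assumes diag: "\<And>i. N i i = 1"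
    and z: "\<And>i j. (\<Sum>k\<le>i. N i k * E k j) = 0"
  shows "E i j = 0"
proof (induction i arbitrary: j rule: less_induct)
  case (less i)
  have "0 = (\<Sum>k\<le>i. N i k * E k j)" using z by simp
  also have "\<dots> = N i i * E i j + (\<Sum>k<i. N i k * E k j)" by (rule sum_atMost_split)
  also have "(\<Sum>k<i. N i k * E k j) = 0" using less by simp
  finally show ?case using diag by simp
qed

function binv :: "(nat \<Rightarrow> nat \<Rightarrow> int) \<Rightarrow> nat \<Rightarrow> nat \<Rightarrow> int" where
  "binv A i j = (if i < j then 0 else if i = j then 1 else - (\<Sum>k<i. A i k * binv A k j))"
  by pat_completeness auto
termination by (relation "measure (\<lambda>(A,i,j). i)") auto

declare binv.simps[simp del]

lemma binv_lt: "lower_tri (binv A)"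
  unfolding lower_tri_def by (subst binv.simps) auto

lemma binv_diag: "binv A i i = 1"
  by (subst binv.simps) auto

lemma binv_right:
  assumes diag: "\<And>i. A i i = 1"
  shows "lt_mult A (binv A) = id_mat"
proof (intro ext)
  fix i j
  have s: "lt_mult A (binv A) i j = A i i * binv A i j + (\<Sum>k<i. A i k * binv A k j)"
    unfolding lt_mult_def by (rule sum_atMost_split)
  show "lt_mult A (binv A) i j = id_mat i j"
  proof (cases "i < j")
    case True
    have "lt_mult A (binv A) i j = 0" unfolding lt_mult_def
      using True binv_lt[of A] unfolding lower_tri_def by (intro sum.neutral) auto
    then show ?thesis using True by (simp add: id_mat_def)
  next
    case False
    show ?thesis
    proof (cases "i = j")
      case True
      have "(\<Sum>k<i. A i k * binv A k j) = 0"
        using True binv_lt[of A] unfolding lower_tri_def by (intro sum.neutral) auto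
      then show ?thesis using s True diag binv_diag by (simp add: id_mat_def)
    next
      case F2: False
      have "binv A i j = - (\<Sum>k<i. A i k * binv A k j)"
        using False F2 by (subst binv.simps) auto
      then show ?thesis using s diag F2 by (simp add: id_mat_def)
    qed
  qed
qed

lemma lt_assoc:
  assumes "lower_tri B"
  shows "lt_mult (lt_mult A B) C = lt_mult A (lt_mult B C)"
proof (intro ext)
  fix i j
  have "lt_mult A (lt_mult B C) i j = (\<Sum>l\<le>i. A i l * (\<Sum>k\<le>l. B l k * C k j))"
    by (simp add: lt_mult_def)
  also have "\<dots> = (\<Sum>l\<le>i. A i l * (\<Sum>k\<le>i. B l k * C k j))"
  proof (intro sum.cong refl)
    fix l assume l: "l \<in> {..i}"
    have "(\<Sum>k\<le>i. B l k * C k j) = (\<Sum>k\<le>l. B l k * C k j)"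
      using l assms unfolding lower_tri_def by (intro sum.mono_neutral_right) auto
    then show "A i l * (\<Sum>k\<le>l. B l k * C k j) = A i l * (\<Sum>k\<le>i. B l k * C k j)" by simp
  qed
  also have "\<dots> = (\<Sum>l\<le>i. \<Sum>k\<le>i. A i l * B l k * C k j)"
    by (simp add: sum_distrib_left mult.assoc)
  also have "\<dots> = (\<Sum>k\<le>i. \<Sum>l\<le>i. A i l * B l k * C k j)"
    by (rule sum.swap)
  also have "\<dots> = (\<Sum>k\<le>i. (\<Sum>l\<le>i. A i l * B l k) * C k j)"
    by (simp add: sum_distrib_right)
  also have "\<dots> = lt_mult (lt_mult A B) C i j" by (simp add: lt_mult_def)
  finally show "lt_mult (lt_mult A B) C i j = lt_mult A (lt_mult B C) i j" by simp
qed

lemma lt_id_left: "lower_tri C \<Longrightarrow> lt_mult id_mat C = C"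
proof (intro ext)
  fix i j
  have "lt_mult id_mat C i j = (\<Sum>k\<le>i. if k = i then C i j else 0)"
    unfolding lt_mult_def by (intro sum.cong) (auto simp: id_mat_def)
  then show "lt_mult id_mat C i j = C i j" by simp
qed

lemma lt_id_right: "lower_tri A \<Longrightarrow> lt_mult A id_mat = A"
  unfolding lt_mult_def id_mat_def lower_tri_def
  by (intro ext) (auto simp: if_distrib cong: if_cong)

lemma binv_left:
  assumes lt: "lower_tri A" and diag: "\<And>i. A i i = 1"
  shows "lt_mult (binv A) A = id_mat"
proof -
  let ?B = "binv A" let ?C = "binv ?B"
  have BC: "lt_mult ?B ?C = id_mat" by (rule binv_right) (rule binv_diag)
  have "A = lt_mult A id_mat" using lt by (simp add: lt_id_right)
  also have "\<dots> = lt_mult A (lt_mult ?B ?C)" using BC by simp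
  also have "\<dots> = lt_mult (lt_mult A ?B) ?C" using binv_lt[of A] by (simp add: lt_assoc)
  also have "\<dots> = ?C" using binv_right[of A, OF diag] binv_lt[of ?B] by (simp add: lt_id_left)
  finally show ?thesis using BC by simp
qed

lemma mat_inv_binv:
  assumes lt: "lower_tri A" and diag: "\<And>i. A i i = 1"
  shows "mat_inv A = binv A"
  unfolding mat_inv_def
proof (rule the_equality)
  show "lower_tri (binv A) \<and> lt_mult A (binv A) = id_mat \<and> lt_mult (binv A) A = id_mat"
    using binv_lt binv_right[of A, OF diag] binv_left[OF lt diag] by auto
next
  fix B assume B: "lower_tri B \<and> lt_mult A B = id_mat \<and> lt_mult B A = id_mat"
  have "(\<lambda>i j. B i j - binv A i j) i j = 0" for i j
  proof (rule cancel_lt[of A], rule diag)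
    fix i j
    have "(\<Sum>k\<le>i. A i k * (B k j - binv A k j)) = lt_mult A B i j - lt_mult A (binv A) i j"
      by (simp add: lt_mult_def algebra_simps sum_subtractf)
    then show "(\<Sum>k\<le>i. A i k * (B k j - binv A k j)) = 0"
      using B binv_right[of A, OF diag] by simp
  qed
  then show "B = binv A" by (intro ext) simp
qed


lemma main_rec:
  fixes A :: "nat \<Rightarrow> nat \<Rightarrow> int"
  assumes lt: "lower_tri A" and diag: "\<And>i. A i i = 1"
    and colrec: "\<And>n k. A (Suc n) (Suc k) = A n k + (case n of 0 \<Rightarrow> 0 | Suc n' \<Rightarrow> A n' k)"
  shows "binv A (Suc i) (Suc m) = binv A i m - binv A (Suc i) (Suc (Suc m))"
proof -
  let ?B = "binv A"
  have AB: "lt_mult A ?B = id_mat" by (rule binv_right[of A, OF diag])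
  have ABs: "(\<Sum>k\<le>i. A i k * ?B k j) = id_mat i j" for i j
    using fun_cong[OF fun_cong[OF AB, of i], of j] unfolding lt_mult_def .
  define E where "E p m = ?B p (Suc m) + ?B p (Suc (Suc m)) - (case p of 0 \<Rightarrow> 0 | Suc p' \<Rightarrow> ?B p' m)" for p m
  have "E (Suc i) m = 0"
  proof (rule cancel_lt[of A], rule diag)
    fix i m
    have T: "(\<Sum>k\<le>i. A i k * (case k of 0 \<Rightarrow> 0 | Suc p' \<Rightarrow> ?B p' m))
        = (case i of 0 \<Rightarrow> 0 | Suc n \<Rightarrow> id_mat n m + (case n of 0 \<Rightarrow> 0 | Suc n' \<Rightarrow> id_mat n' m))"
    proof (cases i)
      case 0 then show ?thesis by simp
    next
      case (Suc n)
      have "(\<Sum>k\<le>i. A i k * (case k of 0 \<Rightarrow> 0 | Suc p' \<Rightarrow> ?B p' m))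
          = (\<Sum>k\<le>n. A (Suc n) (Suc k) * ?B k m)"
        unfolding Suc by (subst sum.atMost_Suc_shift) simp
      also have "\<dots> = (\<Sum>k\<le>n. A n k * ?B k m) + (\<Sum>k\<le>n. (case n of 0 \<Rightarrow> 0 | Suc n' \<Rightarrow> A n' k) * ?B k m)"
        unfolding colrec distrib_right sum.distrib ..
      also have "(\<Sum>k\<le>n. (case n of 0 \<Rightarrow> 0 | Suc n' \<Rightarrow> A n' k) * ?B k m) = (case n of 0 \<Rightarrow> 0 | Suc n' \<Rightarrow> id_mat n' m)"
      proof (cases n)
        case 0 then show ?thesis by simp
      next
        case (Suc n')
        have "A n' (Suc n') = 0" using lt unfolding lower_tri_def by simp
        then have "(\<Sum>k\<le>Suc n'. A n' k * ?B k m) = (\<Sum>k\<le>n'. A n' k * ?B k m)" by simp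
        then show ?thesis using Suc ABs by simp
      qed
      finally show ?thesis using Suc ABs by simp
    qed
    have "(\<Sum>k\<le>i. A i k * E k m) = (\<Sum>k\<le>i. A i k * ?B k (Suc m)) + (\<Sum>k\<le>i. A i k * ?B k (Suc (Suc m)))
        - (\<Sum>k\<le>i. A i k * (case k of 0 \<Rightarrow> 0 | Suc p' \<Rightarrow> ?B p' m))"
      unfolding E_def by (simp add: algebra_simps sum.distrib sum_subtractf)
    also have "\<dots> = id_mat i (Suc m) + id_mat i (Suc (Suc m))
        - (case i of 0 \<Rightarrow> 0 | Suc n \<Rightarrow> id_mat n m + (case n of 0 \<Rightarrow> 0 | Suc n' \<Rightarrow> id_mat n' m))"
      by (simp only: T ABs)
    also have "\<dots> = 0"
    proof (cases i)
      case 0 then show ?thesis by (simp add: id_mat_def)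
    next
      case (Suc n)
      then show ?thesis by (cases n) (simp_all add: id_mat_def)
    qed
    finally show "(\<Sum>k\<le>i. A i k * E k m) = 0" .
  qed
  then show ?thesis unfolding E_def by simp
qed


lemma riordan_F:
  fixes g :: "int fps"
  shows "riordan g (fps_X * (1 + fps_X)) i j = (if i < j then 0 else fps_nth (g * (1 + fps_X) ^ j) (i - j))"
proof -
  have h: "g * (fps_X * (1 + fps_X)) ^ j = fps_X ^ j * (g * (1 + fps_X) ^ j)"
    by (simp only: power_mult_distrib mult.left_commute)
  show ?thesis unfolding riordan_def h by (rule fps_X_power_mult_nth)
qed

lemma riordan_F_lt: "lower_tri (riordan (g::int fps) (fps_X * (1 + fps_X)))"
  unfolding lower_tri_def by (simp add: riordan_F)

lemma riordan_F_diag: "fps_nth g 0 = 1 \<Longrightarrow> riordan (g::int fps) (fps_X * (1 + fps_X)) i i = 1"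
  by (simp add: riordan_F fps_power_zeroth)

lemma riordan_F_col:
  fixes g :: "int fps"
  shows "riordan g (fps_X * (1 + fps_X)) (Suc n) (Suc k) =
     riordan g (fps_X * (1 + fps_X)) n k + (case n of 0 \<Rightarrow> 0 | Suc n' \<Rightarrow> riordan g (fps_X * (1 + fps_X)) n' k)"
proof -
  let ?P = "g * (fps_X * (1 + fps_X)) ^ k"
  have "g * (fps_X * (1 + fps_X)) ^ Suc k = fps_X * ?P + fps_X * (fps_X * ?P)"
    by (simp only: power_Suc distrib_left distrib_right mult_1_left mult_1_right mult.assoc mult.left_commute)
  then show ?thesis unfolding riordan_def by (cases n) simp_all
qed

lemma D_entry: "riordan (1::int fps) (- fps_X) i j = (if i = j then (-1) ^ j else 0)"
proof -
  have "fps_nth ((- fps_X :: int fps) ^ j) i = (if i = j then (-1) ^ j else 0)" for i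
  proof (induction j arbitrary: i)
    case 0 then show ?case by simp
  next
    case (Suc j)
    have "fps_nth ((- fps_X :: int fps) ^ Suc j) i = - fps_nth (fps_X * (- fps_X :: int fps) ^ j) i"
      by (simp only: power_Suc mult_minus_left fps_neg_nth)
    also have "\<dots> = (if i = Suc j then (-1) ^ Suc j else 0)"
      by (cases i) (simp_all add: Suc.IH)
    finally show ?case .
  qed
  then show ?thesis unfolding riordan_def by simp
qed

lemma DBD:
  fixes D B :: "nat \<Rightarrow> nat \<Rightarrow> int"
  assumes D: "\<And>i j. D i j = (if i = j then (-1) ^ j else 0)" and lt: "lower_tri B"
  shows "lt_mult (lt_mult D B) D i j = (-1) ^ (i + j) * B i j"
proof -
  have 1: "lt_mult D B i j = (-1) ^ i * B i j" for i j
  proof -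
    have "lt_mult D B i j = (\<Sum>k\<le>i. if k = i then (-1) ^ i * B i j else 0)"
      unfolding lt_mult_def by (intro sum.cong) (auto simp: D)
    then show ?thesis by simp
  qed
  have "lt_mult (lt_mult D B) D i j = (\<Sum>k\<le>i. (if k = j then (-1) ^ i * B i k * (-1) ^ j else 0))"
    unfolding lt_mult_def[of _ D] 1 D by (intro sum.cong) auto
  also have "\<dots> = (-1) ^ (i + j) * B i j"
    using lt unfolding lower_tri_def by (auto simp: power_add)
  finally show ?thesis .
qed

lemma final_sum:
  fixes M :: "nat \<Rightarrow> nat \<Rightarrow> int"
  assumes rec: "\<And>i m. M (Suc i) (Suc m) = M i m + M (Suc i) (Suc (Suc m))"
    and up: "\<And>i. M i (Suc i) = 0"
  shows "1 \<le> j \<Longrightarrow> j \<le> i \<Longrightarrow> M i (i - j + 1) = (\<Sum>k=1..j. M (i - 1) (i - k))"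
proof (induction j)
  case 0 then show ?case by simp
next
  case (Suc j)
  obtain n where n: "i = Suc n" using Suc.prems by (cases i) auto
  show ?case
  proof (cases j)
    case 0
    have "M (Suc n) (Suc n) = M n n" using rec[of n n] up[of "Suc n"] by simp
    then show ?thesis using n 0 by simp
  next
    case (Suc j')
    have jn: "j \<le> n" using Suc.prems n by simp
    have IH: "M i (i - j + 1) = (\<Sum>k=1..j. M (i - 1) (i - k))" using Suc.IH Suc.prems Suc by simp
    have e: "i - Suc j + 1 = Suc (n - j)" "i - j + 1 = Suc (Suc (n - j))" using jn n by auto
    have "M i (i - Suc j + 1) = M n (n - j) + M i (i - j + 1)"
      using rec[of n "n - j"] e n by simp
    also have "\<dots> = (\<Sum>k=1..Suc j. M (i - 1) (i - k))"
      using IH n by simp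
    finally show ?thesis .
  qed
qed

lemma M_rec:
  fixes g :: "int fps" and M :: "nat \<Rightarrow> nat \<Rightarrow> int"
  assumes g0: "fps_nth g 0 = 1"
    and M: "M = lt_mult (lt_mult (riordan 1 (- fps_X)) (mat_inv (riordan g (fps_X * (1 + fps_X))))) (riordan 1 (- fps_X))"
  shows "\<forall>i j. 1 \<le> j \<and> j \<le> i \<longrightarrow> M i (i - j + 1) = (\<Sum>k=1..j. M (i - 1) (i - k))"
proof -
  let ?A = "riordan g (fps_X * (1 + fps_X))"
  have inv: "mat_inv ?A = binv ?A"
    by (rule mat_inv_binv[OF riordan_F_lt riordan_F_diag[OF g0]])
  have Me: "M i j = (-1) ^ (i + j) * binv ?A i j" for i j
    unfolding M inv by (rule DBD[OF D_entry binv_lt])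
  have br: "binv ?A (Suc i) (Suc m) = binv ?A i m - binv ?A (Suc i) (Suc (Suc m))" for i m
    by (rule main_rec[of ?A, OF riordan_F_lt riordan_F_diag[OF g0] riordan_F_col])
  have rec: "M (Suc i) (Suc m) = M i m + M (Suc i) (Suc (Suc m))" for i m
    unfolding Me br[of i m] by (simp add: algebra_simps power_add)
  have up: "M i (Suc i) = 0" for i
    unfolding Me using binv_lt[of ?A] unfolding lower_tri_def by simp
  show ?thesis using final_sum[of M, OF rec up] by simp
qed

theorem corollary3p3:
  fixes D FS LS r q :: "nat \<Rightarrow> nat \<Rightarrow> int"
  assumes "D = riordan 1 (- fps_X)"
    and "FS = riordan 1 (fps_X * (1 + fps_X))"
    and "LS = riordan (1 + 2 * fps_X) (fps_X * (1 + fps_X))"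
    and "r = lt_mult (lt_mult D (mat_inv FS)) D"
    and "q = lt_mult (lt_mult D (mat_inv LS)) D"
  shows "\<forall>i j. 1 \<le> j \<and> j \<le> i \<longrightarrow>
           r i (i - j + 1) = (\<Sum>k=1..j. r (i - 1) (i - k)) \<and>
           q i (i - j + 1) = (\<Sum>k=1..j. q (i - 1) (i - k))"
proof -
  have r: "r = lt_mult (lt_mult (riordan 1 (- fps_X)) (mat_inv (riordan 1 (fps_X * (1 + fps_X))))) (riordan 1 (- fps_X))"
    using assms(1,2,4) by (simp only:)
  have q: "q = lt_mult (lt_mult (riordan 1 (- fps_X)) (mat_inv (riordan (1 + 2 * fps_X) (fps_X * (1 + fps_X))))) (riordan 1 (- fps_X))"
    using assms(1,3,5) by (simp only:)
  have g1: "fps_nth (1::int fps) 0 = 1" by simp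
  have g2: "fps_nth (1 + 2 * fps_X :: int fps) 0 = 1" by simp
  note a = M_rec[OF g1 r]
  note b = M_rec[OF g2 q]
  show ?thesis
  proof (intro allI impI conjI)
    fix i j :: nat assume h: "1 \<le> j \<and> j \<le> i"
    show "r i (i - j + 1) = (\<Sum>k=1..j. r (i - 1) (i - k))" using a h by (elim allE impE)
    show "q i (i - j + 1) = (\<Sum>k=1..j. q (i - 1) (i - k))" using b h by (elim allE impE)
  qed
qed

end
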